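(* Let $G$ be a bipartite permutation graph with a transitive vertex ordering $<$, and let $M$ be a uniquely restricted matching in $G$ starting with $e'\in E(G)$. Let $e\in E(G)$ be such that $l(e)<l(e')$ and $\{e,e'\}$ is a uniquely restricted matching in $G$. Then $\{e\}\cup M$ is a uniquely restricted matching in $G$ starting with $e$.
   Context: Graphs are finite, simple, undirected. A permutation graph is a graph isomorphic to some $G_\pi$, where for a permutation $\pi$ of $\{1,\dots,n\}$, $G_\pi$ has vertex set $\{1,\dots,n\}$ and edges $ij$ with $(i-j)(\pi(i)-\pi(j))<0$; a bipartite permutation graph is a permutation graph that is bipartite. An ordering $<$ of $V(G)$ is a transitive vertex ordering if for all $u<v<w$: (a) $uv,vw\in E(G)$ implies $uw\in E(G)$, and (b) $uw\in E(G)$ implies $uv\in E(G)$ or $vw\in E(G)$. For an edge $e=uv$, $l(e)=\min_<\{u,v\}$ and $r(e)=\max_<\{u,v\}$. A matching is a set of pairwise vertex-disjoint edges; it is uniquely restricted if no other matching of $G$ matches exactly the same vertex set. A matching $M$ whose edges are labelled $e_1,\dots,e_{|M|}$ with $l(e_1)<l(e_2)<\cdots<l(e_{|M|})$ is said to start with $e_1$. *)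

theory Defs
  imports Main
begin

definition simple_graph :: "'a set \<Rightarrow> 'a set set \<Rightarrow> bool" where
  "simple_graph V E \<longleftrightarrow> finite V \<and>
     (\<forall>e\<in>E. \<exists>u v. e = {u, v} \<and> u \<in> V \<and> v \<in> V \<and> u \<noteq> v)"

definition perm_graph_edges :: "nat \<Rightarrow> (nat \<Rightarrow> nat) \<Rightarrow> nat set set" where
  "perm_graph_edges n \<pi> = {{i, j} | i j. i \<in> {1..n} \<and> j \<in> {1..n} \<and>
      (int i - int j) * (int (\<pi> i) - int (\<pi> j)) < 0}"

definition permutation_graph :: "'a set \<Rightarrow> 'a set set \<Rightarrow> bool" where
  "permutation_graph V E \<longleftrightarrow>
     (\<exists>n \<pi> f. bij_betw \<pi> {1..n} {1..n} \<and> bij_betw f V {1..n} \<and>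
        (\<forall>u\<in>V. \<forall>v\<in>V. {u, v} \<in> E \<longleftrightarrow> {f u, f v} \<in> perm_graph_edges n \<pi>))"

definition bipartite :: "'a set \<Rightarrow> 'a set set \<Rightarrow> bool" where
  "bipartite V E \<longleftrightarrow> (\<exists>A. A \<subseteq> V \<and> (\<forall>e\<in>E. card (e \<inter> A) = 1))"

definition bipartite_permutation_graph :: "'a set \<Rightarrow> 'a set set \<Rightarrow> bool" where
  "bipartite_permutation_graph V E \<longleftrightarrow> permutation_graph V E \<and> bipartite V E"

text \<open>A transitive vertex ordering: R is a strict linear order on V (pairs (u,v) mean u < v)
  satisfying conditions (a) and (b).\<close>
definition transitive_vertex_ordering :: "'a set \<Rightarrow> 'a set set \<Rightarrow> ('a \<times> 'a) set \<Rightarrow> bool" where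
  "transitive_vertex_ordering V E R \<longleftrightarrow>
     R \<subseteq> V \<times> V \<and> strict_linear_order_on V R \<and>
     (\<forall>u\<in>V. \<forall>v\<in>V. \<forall>w\<in>V. (u, v) \<in> R \<and> (v, w) \<in> R \<longrightarrow>
        ({u, v} \<in> E \<and> {v, w} \<in> E \<longrightarrow> {u, w} \<in> E) \<and>
        ({u, w} \<in> E \<longrightarrow> {u, v} \<in> E \<or> {v, w} \<in> E))"

definition lft :: "('a \<times> 'a) set \<Rightarrow> 'a set \<Rightarrow> 'a" where
  "lft R e = (THE u. u \<in> e \<and> (\<forall>w\<in>e. w \<noteq> u \<longrightarrow> (u, w) \<in> R))"

definition matching :: "'a set set \<Rightarrow> 'a set set \<Rightarrow> bool" where
  "matching E M \<longleftrightarrow> M \<subseteq> E \<and> (\<forall>e\<in>M. \<forall>f\<in>M. e \<noteq> f \<longrightarrow> e \<inter> f = {})"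

definition uniquely_restricted_matching :: "'a set set \<Rightarrow> 'a set set \<Rightarrow> bool" where
  "uniquely_restricted_matching E M \<longleftrightarrow> matching E M \<and>
     (\<forall>M'. matching E M' \<and> \<Union>M' = \<Union>M \<longrightarrow> M' = M)"

definition starts_with :: "('a \<times> 'a) set \<Rightarrow> 'a set set \<Rightarrow> 'a set \<Rightarrow> bool" where
  "starts_with R M e \<longleftrightarrow> e \<in> M \<and> (\<forall>f\<in>M. f \<noteq> e \<longrightarrow> (lft R e, lft R f) \<in> R)"

end

theory Submission
  imports Defs
begin

locale tvo =
  fixes V :: "'a set" and E :: "'a set set" and R :: "('a \<times> 'a) set"
  assumes edges: "\<And>e. e \<in> E \<Longrightarrow> \<exists>u v. e = {u, v} \<and> u \<in> V \<and> v \<in> V \<and> u \<noteq> v"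
    and RV: "R \<subseteq> V \<times> V"
    and trR: "trans R" and irr: "\<And>x. (x, x) \<notin> R"
    and tot: "\<And>x y. x \<in> V \<Longrightarrow> y \<in> V \<Longrightarrow> x \<noteq> y \<Longrightarrow> (x, y) \<in> R \<or> (y, x) \<in> R"
    and ta: "\<And>u v w. (u, v) \<in> R \<Longrightarrow> (v, w) \<in> R \<Longrightarrow> {u, v} \<in> E \<Longrightarrow> {v, w} \<in> E \<Longrightarrow> {u, w} \<in> E"
    and tb: "\<And>u v w. (u, v) \<in> R \<Longrightarrow> (v, w) \<in> R \<Longrightarrow> {u, w} \<in> E \<Longrightarrow> {u, v} \<in> E \<or> {v, w} \<in> E"
    and notri: "\<And>u v w. {u, v} \<in> E \<Longrightarrow> {v, w} \<in> E \<Longrightarrow> {u, w} \<in> E \<Longrightarrow> False"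
    and finV: "finite V"
begin

lemma tr: "(x, y) \<in> R \<Longrightarrow> (y, z) \<in> R \<Longrightarrow> (x, z) \<in> R"
  using trR by (meson transE)

lemma asy: "(x, y) \<in> R \<Longrightarrow> (y, x) \<notin> R"
  using tr irr by blast

lemma edge_V: "{u, v} \<in> E \<Longrightarrow> u \<in> V \<and> v \<in> V \<and> u \<noteq> v"
proof -
  assume "{u, v} \<in> E"
  then obtain p q where "{u, v} = {p, q}" "p \<in> V" "q \<in> V" "p \<noteq> q" using edges by blast
  then show ?thesis by (metis doubleton_eq_iff insert_absorb2 insert_iff)
qed

lemma F1: "(u, v) \<in> R \<Longrightarrow> (v, w) \<in> R \<Longrightarrow> {u, v} \<in> E \<Longrightarrow> {v, w} \<in> E \<Longrightarrow> False"
  using ta notri by blast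

lemma orient: "{u, v} \<in> E \<Longrightarrow> (u, v) \<in> R \<or> (v, u) \<in> R"
  using edge_V tot by blast

lemma lft_eq: "(u, v) \<in> R \<Longrightarrow> lft R {u, v} = u"
  unfolding lft_def
  apply (rule the_equality)
  using irr asy by auto

lemma orient_eq: "{u, v} = {a, b} \<Longrightarrow> (u, v) \<in> R \<Longrightarrow> (a, b) \<in> R \<Longrightarrow> u = a \<and> v = b"
  using asy[of a b] by (auto simp: doubleton_eq_iff)

lemma finE: "finite E"
proof -
  have "E \<subseteq> Pow V" using edges by blast
  then show ?thesis using finV finite_subset by blast
qed

lemma edge_ex: "e \<in> E \<Longrightarrow> \<exists>u v. e = {u, v} \<and> (u, v) \<in> R \<and> {u, v} \<in> E"
proof -
  assume e: "e \<in> E"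
  then obtain u v where uv: "e = {u, v}" "u \<in> V" "v \<in> V" "u \<noteq> v" using edges by blast
  then consider "(u, v) \<in> R" | "(v, u) \<in> R" using tot by blast
  then show ?thesis
  proof cases
    case 1 then show ?thesis using uv e by blast
  next
    case 2
    have "e = {v, u}" using uv by auto
    then show ?thesis using 2 e by blast
  qed
qed

lemma edge_ex2: "e \<in> E \<Longrightarrow> a \<in> e \<Longrightarrow> \<exists>b. e = {a, b} \<and> a \<noteq> b \<and> {a, b} \<in> E"
proof -
  assume e: "e \<in> E" "a \<in> e"
  then obtain u v where uv: "e = {u, v}" "u \<noteq> v" using edges by blast
  then show ?thesis using e by (auto simp: insert_commute)
qed

lemma union_minus: "matching E N \<Longrightarrow> f \<in> N \<Longrightarrow> \<Union>(N - {f}) = \<Union>N - f"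
  unfolding matching_def apply (rule set_eqI) apply (simp) by blast

lemma min_ex: "finite S \<Longrightarrow> S \<noteq> {} \<Longrightarrow> S \<subseteq> V \<Longrightarrow> \<exists>a\<in>S. \<forall>s\<in>S. s \<noteq> a \<longrightarrow> (a, s) \<in> R"
proof (induction S rule: finite_ne_induct)
  case (singleton x)
  then show ?case by simp
next
  case (insert x F)
  then have "F \<subseteq> V" by simp
  then obtain a where a: "a \<in> F" "\<forall>s\<in>F. s \<noteq> a \<longrightarrow> (a, s) \<in> R" using insert.IH by blast
  have xa: "x \<noteq> a" using insert.hyps(3) a(1) by blast
  have "x \<in> V" "a \<in> V" using insert.prems a(1) by auto
  then consider "(x, a) \<in> R" | "(a, x) \<in> R" using tot xa by blast
  then show ?case
  proof cases
    case 1
    have "\<forall>s\<in>insert x F. s \<noteq> x \<longrightarrow> (x, s) \<in> R"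
    proof (intro ballI impI)
      fix s assume "s \<in> insert x F" "s \<noteq> x"
      then have "s \<in> F" by simp
      show "(x, s) \<in> R"
      proof (cases "s = a")
        case True then show ?thesis using 1 by simp
      next
        case False then show ?thesis using a(2) \<open>s \<in> F\<close> 1 tr by blast
      qed
    qed
    then show ?thesis by blast
  next
    case 2
    have "\<forall>s\<in>insert x F. s \<noteq> a \<longrightarrow> (a, s) \<in> R" using a(2) 2 by simp
    then show ?thesis using a(1) by blast
  qed
qed

lemma cross_UR:
  assumes "uniquely_restricted_matching E N" "{u, v} \<in> N" "{x, y} \<in> N" "{u, v} \<noteq> {x, y}"
    "{u, y} \<in> E" "{x, v} \<in> E"
  shows False
proof -
  have m: "matching E N" using assms(1) unfolding uniquely_restricted_matching_def by blast
  have NE: "N \<subseteq> E" using m unfolding matching_def by blast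
  have md: "\<And>g h. g \<in> N \<Longrightarrow> h \<in> N \<Longrightarrow> g \<noteq> h \<Longrightarrow> g \<inter> h = {}"
    using m unfolding matching_def by blast
  have d: "{u, v} \<inter> {x, y} = {}" using md[OF assms(2,3,4)] .
  have ne: "u \<noteq> v" "x \<noteq> y" "u \<noteq> y" "x \<noteq> v"
    using edge_V assms(5,6) NE assms(2,3) by blast+
  define Rest where "Rest = N - {{u, v}, {x, y}}"
  define N' where "N' = insert {u, y} (insert {x, v} Rest)"
  have AB: "{u, y} \<inter> {x, v} = {}" using ne d by auto
  have R1: "g \<inter> {u, y} = {} \<and> g \<inter> {x, v} = {}" if "g \<in> Rest" for g
  proof -
    have "g \<inter> {u, v} = {}" "g \<inter> {x, y} = {}" using md assms(2,3) that unfolding Rest_def by auto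
    then show ?thesis by blast
  qed
  have R2: "g \<inter> h = {}" if "g \<in> Rest" "h \<in> Rest" "g \<noteq> h" for g h
    using md that unfolding Rest_def by blast
  have "matching E N'"
    unfolding matching_def
  proof (intro conjI ballI impI)
    show "N' \<subseteq> E" using NE assms(5,6) unfolding N'_def Rest_def by blast
  next
    fix g h assume gh: "g \<in> N'" "h \<in> N'" "g \<noteq> h"
    then consider "g = {u, y}" | "g = {x, v}" | "g \<in> Rest" unfolding N'_def by blast
    then show "g \<inter> h = {}"
    proof cases
      case 1
      then consider "h = {x, v}" | "h \<in> Rest" using gh unfolding N'_def by blast
      then show ?thesis using 1 AB R1 by cases blast+
    next
      case 2
      then consider "h = {u, y}" | "h \<in> Rest" using gh unfolding N'_def by blast
      then show ?thesis using 2 AB R1 by cases blast+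
    next
      case 3
      then consider "h = {u, y}" | "h = {x, v}" | "h \<in> Rest" using gh unfolding N'_def by blast
      then show ?thesis using 3 gh(3) R1 R2 by cases blast+
    qed
  qed
  moreover have "\<Union>N' = \<Union>N"
  proof -
    have "N = insert {u, v} (insert {x, y} Rest)" using assms(2,3) unfolding Rest_def by blast
    then have "\<Union>N = {u, v} \<union> {x, y} \<union> \<Union>Rest" by simp
    moreover have "\<Union>N' = {u, y} \<union> {x, v} \<union> \<Union>Rest" unfolding N'_def by simp
    ultimately show ?thesis by blast
  qed
  ultimately have "N' = N" using assms(1) unfolding uniquely_restricted_matching_def by simp
  then have "{u, y} \<in> N" unfolding N'_def by blast
  moreover have "y \<notin> {u, v}" using d by blast
  then have "{u, y} \<noteq> {u, v}" by blast
  ultimately have "{u, y} \<inter> {u, v} = {}" using md assms(2) by blast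
  then show False by blast
qed

definition nocross :: "'a set set \<Rightarrow> bool" where
  "nocross N \<longleftrightarrow> (\<forall>f\<in>N. \<forall>g\<in>N. \<forall>u v x y. f = {u, v} \<longrightarrow> g = {x, y} \<longrightarrow> f \<noteq> g \<longrightarrow>
     (u, v) \<in> R \<longrightarrow> (x, y) \<in> R \<longrightarrow> {u, y} \<in> E \<longrightarrow> {x, v} \<in> E \<longrightarrow> False)"

lemma main:
  assumes "matching E N" "nocross N" "matching E N'" "\<Union>N' = \<Union>N"
  shows "N' = N"
  using assms
proof (induction "card N" arbitrary: N N' rule: less_induct)
  case less
  have NE: "N \<subseteq> E" using less.prems(1) unfolding matching_def by blast
  have N'E: "N' \<subseteq> E" using less.prems(3) unfolding matching_def by blast
  have finN: "finite N" using NE finE finite_subset by blast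
  show ?case
  proof (cases "N = {}")
    case True
    then have "\<Union>N' = {}" using less.prems(4) by simp
    then have "\<forall>g\<in>N'. g = {}" by blast
    moreover have "\<forall>g\<in>N'. g \<noteq> {}" using N'E edges by blast
    ultimately show ?thesis using True by blast
  next
    case False
    define S where "S = \<Union>N"
    have SV: "S \<subseteq> V" unfolding S_def using NE edges by blast
    have finS: "finite S" using SV finV finite_subset by blast
    obtain e0 where "e0 \<in> N" using False by blast
    then have "e0 \<noteq> {}" using NE edges by blast
    then have "S \<noteq> {}" using \<open>e0 \<in> N\<close> unfolding S_def by blast
    then obtain a where aS: "a \<in> S" and amin: "\<forall>s\<in>S. s \<noteq> a \<longrightarrow> (a, s) \<in> R"
      using min_ex finS SV by blast
    obtain e where eN: "e \<in> N" and ae: "a \<in> e" using aS unfolding S_def by blast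
    obtain b where eab: "e = {a, b}" "a \<noteq> b" "{a, b} \<in> E" using edge_ex2 eN NE ae by blast
    have bS: "b \<in> S" using eN eab unfolding S_def by blast
    have ab: "(a, b) \<in> R" using amin bS eab by auto
    have aS': "a \<in> \<Union>N'" using aS less.prems(4) unfolding S_def by blast
    obtain e2 where e2N: "e2 \<in> N'" and ae2: "a \<in> e2" using aS' by blast
    obtain x where e2ax: "e2 = {a, x}" "a \<noteq> x" "{a, x} \<in> E" using edge_ex2 e2N N'E ae2 by blast
    have xS: "x \<in> S" using e2N e2ax less.prems(4) unfolding S_def by blast
    have ax: "(a, x) \<in> R" using amin xS e2ax by auto
    show ?thesis
    proof (cases "x = b")
      case True
      then have ee2: "e2 = e" using e2ax eab by simp
      have m1: "matching E (N - {e})" using less.prems(1) unfolding matching_def by blast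
      have m2: "matching E (N' - {e})" using less.prems(3) unfolding matching_def by blast
      have nc: "nocross (N - {e})" using less.prems(2) unfolding nocross_def by blast
      have u: "\<Union>(N' - {e}) = \<Union>(N - {e})"
        using union_minus[OF less.prems(1) eN] union_minus[OF less.prems(3)] e2N ee2 less.prems(4)
        by simp
      have c: "card (N - {e}) < card N" using finN eN by (metis card_Diff1_less)
      have "N' - {e} = N - {e}" using less.hyps[OF c m1 nc m2 u] .
      then show ?thesis using eN e2N ee2 by blast
    next
      case False
      have bS': "b \<in> \<Union>N'" using bS less.prems(4) unfolding S_def by blast
      obtain e3 where e3N: "e3 \<in> N'" and be3: "b \<in> e3" using bS' by blast
      obtain y where e3by: "e3 = {b, y}" "b \<noteq> y" "{b, y} \<in> E" using edge_ex2 e3N N'E be3 by blast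
      have e23: "e2 \<noteq> e3" using e2ax e3by eab False by auto
      then have "e2 \<inter> e3 = {}" using less.prems(3) e2N e3N unfolding matching_def by blast
      then have ya: "y \<noteq> a" and yx: "y \<noteq> x" using e2ax e3by by auto
      have yS: "y \<in> S" using e3N e3by less.prems(4) unfolding S_def by blast
      have ay: "(a, y) \<in> R" using amin yS ya by auto
      have yb': "{y, b} \<in> E" using e3by by (simp add: insert_commute)
      have yb: "(y, b) \<in> R"
      proof -
        have "y \<in> V" "b \<in> V" using yS bS SV by auto
        moreover have "(b, y) \<notin> R" using F1[OF ab _ eab(3) e3by(3)] by blast
        ultimately show ?thesis using tot e3by by blast
      qed
      obtain f where fN: "f \<in> N" and xf: "x \<in> f" using xS unfolding S_def by blast
      obtain z where fxz: "f = {x, z}" "x \<noteq> z" "{x, z} \<in> E" using edge_ex2 fN NE xf by blast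
      have zx': "{z, x} \<in> E" using fxz by (simp add: insert_commute)
      have "f \<noteq> e" using fxz eab False e2ax by auto
      then have "f \<inter> e = {}" using less.prems(1) fN eN unfolding matching_def by blast
      then have za: "z \<noteq> a" and zb: "z \<noteq> b" using fxz eab by auto
      have zS: "z \<in> S" using fN fxz unfolding S_def by blast
      have az: "(a, z) \<in> R" using amin zS za by auto
      have zx: "(z, x) \<in> R"
      proof -
        have "z \<in> V" "x \<in> V" using zS xS SV by auto
        moreover have "(x, z) \<notin> R" using F1[OF ax _ e2ax(3) fxz(3)] by blast
        ultimately show ?thesis using tot fxz by blast
      qed
      have "x \<in> V" "y \<in> V" using xS yS SV by auto
      then consider "(y, x) \<in> R" | "(x, y) \<in> R" using tot yx by blast
      then show ?thesis
      proof cases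
        case 1
        have "{a, y} \<in> E \<or> {y, x} \<in> E" using tb[OF ay 1 e2ax(3)] .
        moreover have "{a, y} \<notin> E" using F1[OF ay yb _ yb'] by blast
        ultimately have yxE: "{y, x} \<in> E" by blast
        define M1 where "M1 = N - {e}"
        define M2 where "M2 = insert {y, x} (N' - {e2, e3})"
        have m1: "matching E M1" using less.prems(1) unfolding matching_def M1_def by blast
        have nc: "nocross M1" using less.prems(2) unfolding nocross_def M1_def by blast
        have dis: "h \<in> N' - {e2, e3} \<Longrightarrow> h \<inter> e2 = {} \<and> h \<inter> e3 = {}" for h
          using less.prems(3) e2N e3N unfolding matching_def by blast
        have m2: "matching E M2"
          unfolding matching_def
        proof (intro conjI ballI impI)
          show "M2 \<subseteq> E" using N'E yxE unfolding M2_def by blast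
        next
          fix g h assume gh: "g \<in> M2" "h \<in> M2" "g \<noteq> h"
          have Xs: "k \<inter> {y, x} = {}" if "k \<in> N' - {e2, e3}" for k
          proof -
            have "k \<inter> e2 = {}" "k \<inter> e3 = {}" using dis[OF that] by auto
            moreover have "x \<in> e2" "y \<in> e3" using e2ax(1) e3by(1) by auto
            ultimately show ?thesis by blast
          qed
          have md': "k1 \<inter> k2 = {}" if "k1 \<in> N' - {e2, e3}" "k2 \<in> N' - {e2, e3}" "k1 \<noteq> k2" for k1 k2
            using less.prems(3) that unfolding matching_def by blast
          consider "g = {y, x}" | "g \<in> N' - {e2, e3}" using gh(1) unfolding M2_def by blast
          then show "g \<inter> h = {}"
          proof cases
            case 1
            then have "h \<in> N' - {e2, e3}" using gh unfolding M2_def by blast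
            then show ?thesis using 1 Xs by blast
          next
            case 2
            consider "h = {y, x}" | "h \<in> N' - {e2, e3}" using gh(2) unfolding M2_def by blast
            then show ?thesis
            proof cases
              case 1 then show ?thesis using 2 Xs by blast
            next
              case 3: 2 then show ?thesis using md' 2 gh(3) by blast
            qed
          qed
        qed
        have u1: "\<Union>M1 = S - {a, b}" using union_minus[OF less.prems(1) eN] eab
          unfolding M1_def S_def by simp
        have "\<Union>(N' - {e2}) = \<Union>N' - e2" using union_minus[OF less.prems(3) e2N] .
        moreover have "matching E (N' - {e2})" using less.prems(3) unfolding matching_def by blast
        moreover have "e3 \<in> N' - {e2}" using e3N e23 by blast
        ultimately have "\<Union>(N' - {e2} - {e3}) = \<Union>N' - e2 - e3" using union_minus by metis
        moreover have "N' - {e2} - {e3} = N' - {e2, e3}" by blast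
        ultimately have "\<Union>(N' - {e2, e3}) = S - {a, x} - {b, y}"
          using less.prems(4) e2ax e3by unfolding S_def by simp
        then have u2: "\<Union>M2 = S - {a, b}" unfolding M2_def
          using xS yS ya yx False e3by(2) e2ax(2) eab(2) by auto
        have c: "card M1 < card N" using finN eN unfolding M1_def by (metis card_Diff1_less)
        have "M2 = M1" using less.hyps[OF c m1 nc m2] u1 u2 unfolding M1_def by simp
        then have "{y, x} \<in> N" "{y, x} \<noteq> e" unfolding M1_def M2_def by auto
        then show ?thesis using less.prems(2) eN eab ab 1 e2ax yb' unfolding nocross_def by blast
      next
        case 2
        have zb': "(z, b) \<in> R" using tr[OF zx tr[OF 2 yb]] .
        have "{a, z} \<in> E \<or> {z, b} \<in> E" using tb[OF az zb' eab(3)] .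
        moreover have "{a, z} \<notin> E" using F1[OF az zx _ zx'] by blast
        ultimately have zbE: "{z, b} \<in> E" by blast
        have "f = {z, x}" using fxz by auto
        then show ?thesis using less.prems(2) eN fN \<open>f \<noteq> e\<close> eab ab zx e2ax zbE
          unfolding nocross_def by blast
      qed
    qed
  qed
qed

end

lemma bip_notri: "card ({u,v} \<inter> A) = 1 \<Longrightarrow> card ({v,w} \<inter> A) = 1 \<Longrightarrow> card ({u,w} \<inter> A) = 1 \<Longrightarrow> u\<noteq>v \<Longrightarrow> v\<noteq>w \<Longrightarrow> u\<noteq>w \<Longrightarrow> False"
 by (cases "u\<in>A"; cases "v\<in>A"; cases "w\<in>A") auto

lemma dist2: "{u, v} = {p, q} \<Longrightarrow> p \<noteq> q \<Longrightarrow> u \<noteq> v"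
  by auto

theorem corollary2:
  fixes V :: "'a set" and E :: "'a set set" and R :: "('a \<times> 'a) set"
    and M :: "'a set set" and e e' :: "'a set"
  assumes "simple_graph V E"
    and "bipartite_permutation_graph V E"
    and "transitive_vertex_ordering V E R"
    and "uniquely_restricted_matching E M"
    and "e' \<in> E"
    and "starts_with R M e'"
    and "e \<in> E"
    and "(lft R e, lft R e') \<in> R"
    and "uniquely_restricted_matching E {e, e'}"
  shows "uniquely_restricted_matching E (insert e M) \<and> starts_with R (insert e M) e"
proof -
  have sg: "finite V" "\<And>e. e \<in> E \<Longrightarrow> \<exists>u v. e = {u, v} \<and> u \<in> V \<and> v \<in> V \<and> u \<noteq> v"
    using assms(1) unfolding simple_graph_def by auto
  have T: "R \<subseteq> V \<times> V" "strict_linear_order_on V R"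
    "\<forall>u\<in>V. \<forall>v\<in>V. \<forall>w\<in>V. (u, v) \<in> R \<and> (v, w) \<in> R \<longrightarrow>
        ({u, v} \<in> E \<and> {v, w} \<in> E \<longrightarrow> {u, w} \<in> E) \<and>
        ({u, w} \<in> E \<longrightarrow> {u, v} \<in> E \<or> {v, w} \<in> E)"
    using assms(3) unfolding transitive_vertex_ordering_def by simp_all
  have to1: "trans R" "irrefl R" "total_on V R"
    using T(2) unfolding strict_linear_order_on_def by simp_all
  have to2: "\<And>x. (x, x) \<notin> R" using to1(2) unfolding irrefl_def irrefl_on_def by simp
  have to3: "\<And>x y. x \<in> V \<Longrightarrow> y \<in> V \<Longrightarrow> x \<noteq> y \<Longrightarrow> (x, y) \<in> R \<or> (y, x) \<in> R"
    using to1(3) unfolding total_on_def by simp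
  have tab1: "{u, w} \<in> E" if "(u, v) \<in> R" "(v, w) \<in> R" "{u, v} \<in> E" "{v, w} \<in> E" for u v w
  proof -
    have uvw: "u \<in> V" "v \<in> V" "w \<in> V" using that(1,2) T(1) by auto
    have "(u, v) \<in> R \<and> (v, w) \<in> R \<longrightarrow>
        ({u, v} \<in> E \<and> {v, w} \<in> E \<longrightarrow> {u, w} \<in> E) \<and>
        ({u, w} \<in> E \<longrightarrow> {u, v} \<in> E \<or> {v, w} \<in> E)"
      using bspec[OF bspec[OF bspec[OF T(3) uvw(1)] uvw(2)] uvw(3)] .
    then show ?thesis using that by blast
  qed
  have tab2: "{u, v} \<in> E \<or> {v, w} \<in> E" if "(u, v) \<in> R" "(v, w) \<in> R" "{u, w} \<in> E" for u v w
  proof -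
    have uvw: "u \<in> V" "v \<in> V" "w \<in> V" using that(1,2) T(1) by auto
    have "(u, v) \<in> R \<and> (v, w) \<in> R \<longrightarrow>
        ({u, v} \<in> E \<and> {v, w} \<in> E \<longrightarrow> {u, w} \<in> E) \<and>
        ({u, w} \<in> E \<longrightarrow> {u, v} \<in> E \<or> {v, w} \<in> E)"
      using bspec[OF bspec[OF bspec[OF T(3) uvw(1)] uvw(2)] uvw(3)] .
    then show ?thesis using that by blast
  qed
  have bip: "bipartite V E" using assms(2) unfolding bipartite_permutation_graph_def by simp
  obtain A where A: "\<forall>e\<in>E. card (e \<inter> A) = 1"
    using bip unfolding bipartite_def by iprover
  have dst: "u \<noteq> v" if h: "{u, v} \<in> E" for u v
  proof -
    from sg(2)[OF h] obtain p q where pq: "{u, v} = {p, q} \<and> p \<in> V \<and> q \<in> V \<and> p \<noteq> q"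
      by iprover
    show ?thesis using dist2[OF conjunct1[OF pq] conjunct2[OF conjunct2[OF conjunct2[OF pq]]]] .
  qed
  have notri: False if "{u, v} \<in> E" "{v, w} \<in> E" "{u, w} \<in> E" for u v w
  proof -
    have c: "card ({u, v} \<inter> A) = 1" "card ({v, w} \<inter> A) = 1" "card ({u, w} \<inter> A) = 1"
      using A that by auto
    show False using bip_notri[OF c dst[OF that(1)] dst[OF that(2)] dst[OF that(3)]] .
  qed
  interpret tvo V E R
    apply unfold_locales
    subgoal by (rule sg(2))
    subgoal by (rule T(1))
    subgoal by (rule to1(1))
    subgoal by (rule to2)
    subgoal by (rule to3)
    subgoal by (rule tab1)
    subgoal by (rule tab2)
    subgoal by (rule notri)
    subgoal by (rule sg(1))
    done
  have mM: "matching E M" using assms(4) unfolding uniquely_restricted_matching_def by blast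
  have e'M: "e' \<in> M" using assms(6) unfolding starts_with_def by blast
  obtain a b where eab: "e = {a, b}" "(a, b) \<in> R" "{a, b} \<in> E" using edge_ex assms(7) by blast
  obtain c d where ecd: "e' = {c, d}" "(c, d) \<in> R" "{c, d} \<in> E" using edge_ex assms(5) by blast
  have la: "lft R e = a" using lft_eq eab by blast
  have lc: "lft R e' = c" using lft_eq ecd by blast
  have ac: "(a, c) \<in> R" using assms(8) la lc by simp
  have ee': "e \<noteq> e'"
  proof
    assume "e = e'"
    then have "a = c" using orient_eq eab ecd by metis
    then show False using ac irr by simp
  qed
  have mee: "matching E {e, e'}" using assms(9) unfolding uniquely_restricted_matching_def by blast
  have dee: "e \<inter> e' = {}" using mee ee' unfolding matching_def by blast
  have nade: "\<not> ({a, d} \<in> E \<and> {c, b} \<in> E)"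
    using cross_UR[OF assms(9), of a b c d] eab ecd ee' by blast
  have cb: "{c, b} \<in> E \<and> (b, d) \<in> R" if "(c, b) \<in> R"
  proof -
    have "{a, c} \<in> E \<or> {c, b} \<in> E" using tb[OF ac that eab(3)] .
    moreover have "{a, c} \<notin> E" using F1[OF ac ecd(2) _ ecd(3)] by blast
    ultimately have cbE: "{c, b} \<in> E" by blast
    then have nad: "{a, d} \<notin> E" using nade by blast
    have "b \<noteq> d" using dee eab ecd by auto
    moreover have "b \<in> V" "d \<in> V" using edge_V eab(3) ecd(3) by auto
    moreover have "(d, b) \<notin> R"
    proof
      assume db: "(d, b) \<in> R"
      have "{a, d} \<in> E \<or> {d, b} \<in> E" using tb[OF tr[OF ac ecd(2)] db eab(3)] .
      moreover have "{d, b} \<notin> E" using F1[OF ecd(2) db ecd(3)] by blast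
      ultimately show False using nad by blast
    qed
    ultimately show ?thesis using cbE tot by blast
  qed
  have key: "f \<inter> e = {} \<and> \<not> ({a, q} \<in> E \<and> {p, b} \<in> E)"
    if fM: "f \<in> M" and fpq: "f = {p, q}" and pq: "(p, q) \<in> R" for f p q
  proof (cases "f = e'")
    case True
    then have "p = c" "q = d" using orient_eq fpq pq ecd by metis+
    then show ?thesis using dee nade True by auto
  next
    case False
    have fE: "{p, q} \<in> E" using fM fpq mM unfolding matching_def by blast
    have "lft R f = p" using lft_eq fpq pq by blast
    then have cp: "(c, p) \<in> R" using assms(6) fM False lc unfolding starts_with_def by auto
    have dfe': "f \<inter> e' = {}" using mM fM e'M False unfolding matching_def by blast
    have ncr: "\<not> ({c, q} \<in> E \<and> {p, d} \<in> E)"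
      using cross_UR[OF assms(4), of p q c d] fM e'M False fpq ecd by blast
    have ap: "(a, p) \<in> R" using tr[OF ac cp] .
    have aq: "(a, q) \<in> R" using tr[OF ap pq] .
    have cq: "(c, q) \<in> R" using tr[OF cp pq] .
    have bp: "b \<noteq> p" using F1[OF eab(2) _ eab(3)] pq fE by blast
    have bq: "b \<noteq> q"
    proof
      assume bq: "b = q"
      have "b \<noteq> c" using dee eab ecd by auto
      moreover have "b \<in> V" "c \<in> V" using edge_V eab(3) ecd(3) by auto
      moreover have "(b, c) \<notin> R" using tr[OF _ cq] bq irr by blast
      ultimately have "(c, b) \<in> R" using tot by blast
      then have qd: "(q, d) \<in> R" using cb bq by blast
      have "{c, p} \<in> E \<or> {p, d} \<in> E" using tb[OF cp tr[OF pq qd] ecd(3)] .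
      moreover have "{c, p} \<notin> E" using F1[OF cp pq _ fE] by blast
      ultimately have pd: "{p, d} \<in> E" by blast
      have "{c, q} \<in> E \<or> {q, d} \<in> E" using tb[OF cq qd ecd(3)] .
      moreover have "{q, d} \<notin> E" using F1[OF pq qd fE] by blast
      ultimately show False using pd ncr by blast
    qed
    have dis: "f \<inter> e = {}" using fpq eab ap aq bp bq irr by auto
    have ncross: "\<not> ({a, q} \<in> E \<and> {p, b} \<in> E)"
    proof
      assume h: "{a, q} \<in> E \<and> {p, b} \<in> E"
      have "p \<in> V" "b \<in> V" using edge_V fE eab(3) by auto
      moreover have "(b, p) \<notin> R" using F1[OF eab(2) _ eab(3), of p] h by (auto simp: insert_commute)
      ultimately have pb: "(p, b) \<in> R" using tot bp by blast
      then have "(c, b) \<in> R" using tr[OF cp] by blast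
      then have cbE: "{c, b} \<in> E" and bd: "(b, d) \<in> R" using cb by auto
      then have nad: "{a, d} \<notin> E" using nade by blast
      have "d \<noteq> q" using dfe' fpq ecd by auto
      moreover have "d \<in> V" "q \<in> V" using edge_V fE ecd(3) by auto
      ultimately consider "(d, q) \<in> R" | "(q, d) \<in> R" using tot by blast
      then show False
      proof cases
        case 1
        have "{a, d} \<in> E \<or> {d, q} \<in> E" using tb[OF tr[OF ac ecd(2)] 1] h by blast
        moreover have "{d, q} \<notin> E" using F1[OF ecd(2) 1 ecd(3)] by blast
        ultimately show False using nad by blast
      next
        case 2
        have "{c, p} \<in> E \<or> {p, d} \<in> E" using tb[OF cp tr[OF pq 2] ecd(3)] .
        moreover have "{c, p} \<notin> E" using F1[OF cp pq _ fE] by blast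
        ultimately have pd: "{p, d} \<in> E" by blast
        have "{c, q} \<in> E \<or> {q, d} \<in> E" using tb[OF cq 2 ecd(3)] .
        moreover have "{q, d} \<notin> E" using F1[OF pq 2 fE] by blast
        ultimately show False using pd ncr by blast
      qed
    qed
    show ?thesis using dis ncross by blast
  qed
  have key2: "g \<inter> e = {}" if "g \<in> M" for g
  proof -
    have "g \<in> E" using that mM unfolding matching_def by blast
    then obtain p q where "g = {p, q}" "(p, q) \<in> R" using edge_ex by blast
    then show ?thesis using key that by blast
  qed
  have mN: "matching E (insert e M)"
    using mM key2 assms(7) unfolding matching_def by blast
  have ncM: "nocross M"
    unfolding nocross_def
  proof (intro ballI allI impI)
    fix f g u v x y assume h: "f \<in> M" "g \<in> M" "f = {u, v}" "g = {x, y}" "f \<noteq> g"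
      "(u, v) \<in> R" "(x, y) \<in> R" "{u, y} \<in> E" "{x, v} \<in> E"
    show False using cross_UR[OF assms(4), of u v x y] h by blast
  qed
  have ncN: "nocross (insert e M)"
    unfolding nocross_def
  proof (intro ballI allI impI)
    fix f g u v x y assume h: "f \<in> insert e M" "g \<in> insert e M" "f = {u, v}" "g = {x, y}" "f \<noteq> g"
      "(u, v) \<in> R" "(x, y) \<in> R" "{u, y} \<in> E" "{x, v} \<in> E"
    show False
    proof (cases "f = e")
      case True
      then have "u = a" "v = b" using orient_eq h eab by metis+
      moreover have "g \<in> M" using h True by blast
      ultimately show ?thesis using key h by blast
    next
      case False
      then have fM: "f \<in> M" using h by blast
      show ?thesis
      proof (cases "g = e")
        case True
        then have "x = a" "y = b" using orient_eq h eab by metis+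
        then show ?thesis using key[OF fM h(3) h(6)] h by (auto simp: insert_commute)
      next
        case False
        then have "g \<in> M" using h by blast
        then show ?thesis using ncM fM h unfolding nocross_def by blast
      qed
    qed
  qed
  have UR: "uniquely_restricted_matching E (insert e M)"
    unfolding uniquely_restricted_matching_def
    using mN ncN main by blast
  have SW: "starts_with R (insert e M) e"
    unfolding starts_with_def
  proof (intro conjI ballI impI)
    show "e \<in> insert e M" by blast
  next
    fix g assume g: "g \<in> insert e M" "g \<noteq> e"
    then have gM: "g \<in> M" by blast
    then have "g \<in> E" using mM unfolding matching_def by blast
    then obtain p q where pq: "g = {p, q}" "(p, q) \<in> R" using edge_ex by blast
    then have lg: "lft R g = p" using lft_eq by blast
    show "(lft R e, lft R g) \<in> R"
    proof (cases "g = e'")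
      case True
      then show ?thesis using assms(8) by simp
    next
      case False
      then have "(c, p) \<in> R" using assms(6) gM lg lc unfolding starts_with_def by auto
      then show ?thesis using tr[OF ac] la lg by simp
    qed
  qed
  show ?thesis using UR SW by blast
qed

end
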